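(* Consider EPISODE (described in the context) applied to $f=\frac1N\sum_{i=1}^N f_i$, and suppose: each $f_i$ is twice differentiable with $\|\nabla^2 f_i(x)\|\le L_0+L_1\|\nabla f_i(x)\|$ for all $x$; for all $x$, $\mathbb{E}[\nabla F_i(x;\xi_i)]=\nabla f_i(x)$ and $\|\nabla F_i(x;\xi_i)-\nabla f_i(x)\|\le\sigma$ almost surely ($\xi_i\sim\mathcal{D}_i$); and $\|\nabla f_i(x)\|\le\kappa+\rho\|\nabla f(x)\|$ for all $x,i$, with $\kappa\ge0$, $\rho\ge1$. Fix $C\ge1$ and let $A=1+e^C-\frac{e^C-1}{C}$, $B=\frac{e^C-1}{C}$. Suppose $$2\eta I\big(AL_0+BL_1\kappa+BL_1\rho(\sigma+\gamma/\eta)\big)\le1\quad\text{and}\quad\max\Big\{2\eta I\big(2\sigma+\gamma/\eta\big),\ \gamma I\Big\}\le\frac{C}{L_1}.$$ Then for any round $r$, any $i\in[N]$ and any $t$ with $t-1\in\mathcal{I}_r$, almost surely $$\mathbb{1}_{\mathcal{A}_r}\|x^i_t-\bar{x}_r\|\le 2\eta I\big(2\sigma+\gamma/\eta\big)\quad\text{and}\quad \mathbb{1}_{\bar{\mathcal{A}}_r}\|x^i_t-\bar{x}_r\|\le\gamma I.$$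
   Context: Here $f_i(x)=\mathbb{E}_{\xi_i\sim\mathcal{D}_i}[F_i(x;\xi_i)]$. EPISODE with $N$ clients, communication interval $I\ge1$, step size $\eta>0$, clipping parameter $\gamma>0$: let $t_r=rI$ and $\mathcal{I}_r=\{t_r,\dots,t_{r+1}-1\}$; $\bar{x}_0=x_0$. At the start of round $r$, every client sets $x^i_{t_r}=\bar{x}_r$; each client draws a fresh $\tilde\xi^i_r\sim\mathcal{D}_i$, sets $G^i_r=\nabla F_i(\bar{x}_r;\tilde\xi^i_r)$, and $G_r=\frac1N\sum_i G^i_r$. The event $\mathcal{A}_r=\{\|G_r\|\le\gamma/\eta\}$ and $\bar{\mathcal{A}}_r$ is its complement. For $t\in\mathcal{I}_r$, client $i$ draws fresh $\xi^i_t\sim\mathcal{D}_i$, sets $g^i_t=\nabla F_i(x^i_t;\xi^i_t)-G^i_r+G_r$, and updates $x^i_{t+1}=x^i_t-\eta g^i_t$ on $\mathcal{A}_r$, and $x^i_{t+1}=x^i_t-\gamma g^i_t/\|g^i_t\|$ on $\bar{\mathcal{A}}_r$. Then $\bar{x}_{r+1}=\frac1N\sum_i x^i_{t_{r+1}}$. All samples are independent. $\mathbb{1}_E$ denotes the indicator of event $E$. *)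

theory Defs
  imports "HOL-Probability.Probability"
begin

text \<open>Clients are indexed by i < N. xt r i is the sample drawn by client i at the start
  of round r (for G^i_r), xs t i is the sample drawn by client i at local step t.
  gF i x s is the stochastic gradient of F_i at x with sample s.\<close>

definition epi_G ::
  "nat \<Rightarrow> (nat \<Rightarrow> 'a::real_normed_vector \<Rightarrow> 'b \<Rightarrow> 'a) \<Rightarrow> (nat \<Rightarrow> nat \<Rightarrow> 'b) \<Rightarrow> nat \<Rightarrow> 'a \<Rightarrow> 'a" where
  "epi_G N gF xt r xb = (1 / real N) *\<^sub>R (\<Sum>i<N. gF i xb (xt r i))"

text \<open>epi_loc ... r xb i k is the local iterate x^i_{rI+k} of client i in round r,
  for k = 0..I, where xb is the round-start average xbar_r.\<close>
fun epi_loc ::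
  "nat \<Rightarrow> nat \<Rightarrow> real \<Rightarrow> real \<Rightarrow> (nat \<Rightarrow> 'a::real_normed_vector \<Rightarrow> 'b \<Rightarrow> 'a) \<Rightarrow>
   (nat \<Rightarrow> nat \<Rightarrow> 'b) \<Rightarrow> (nat \<Rightarrow> nat \<Rightarrow> 'b) \<Rightarrow> nat \<Rightarrow> 'a \<Rightarrow> nat \<Rightarrow> nat \<Rightarrow> 'a" where
  "epi_loc N I \<eta> \<gamma> gF xt xs r xb i 0 = xb"
| "epi_loc N I \<eta> \<gamma> gF xt xs r xb i (Suc k) =
    (let y = epi_loc N I \<eta> \<gamma> gF xt xs r xb i k;
         Gr = epi_G N gF xt r xb;
         g = gF i y (xs (r * I + k) i) - gF i xb (xt r i) + Gr
     in if norm Gr \<le> \<gamma> / \<eta> then y - \<eta> *\<^sub>R g else y - (\<gamma> / norm g) *\<^sub>R g)"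

primrec epi_xbar ::
  "nat \<Rightarrow> nat \<Rightarrow> real \<Rightarrow> real \<Rightarrow> (nat \<Rightarrow> 'a::real_normed_vector \<Rightarrow> 'b \<Rightarrow> 'a) \<Rightarrow>
   (nat \<Rightarrow> nat \<Rightarrow> 'b) \<Rightarrow> (nat \<Rightarrow> nat \<Rightarrow> 'b) \<Rightarrow> 'a \<Rightarrow> nat \<Rightarrow> 'a" where
  "epi_xbar N I \<eta> \<gamma> gF xt xs x0 0 = x0"
| "epi_xbar N I \<eta> \<gamma> gF xt xs x0 (Suc r) =
    (1 / real N) *\<^sub>R (\<Sum>i<N. epi_loc N I \<eta> \<gamma> gF xt xs r (epi_xbar N I \<eta> \<gamma> gF xt xs x0 r) i I)"

end

theory Submission
  imports Defs
begin


lemma gronwall_grad: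
  fixes g :: "'a::euclidean_space \<Rightarrow> 'a" and H :: "'a \<Rightarrow> 'a \<Rightarrow> 'a"
  assumes der: "\<And>x. (g has_derivative H x) (at x)"
    and hb: "\<And>x. onorm (H x) \<le> L0 + L1 * norm (g x)"
    and L0: "L0 \<ge> 0" and L1: "L1 > 0"
  shows "norm (g x - g y) \<le> (L0 + L1 * norm (g y)) * (exp (L1 * norm (x - y)) - 1) / L1"
proof (cases "x = y")
  case True then show ?thesis by simp
next
  case False
  define d where "d = norm (x - y)"
  have dpos: "d > 0" using False by (simp add: d_def)
  define a where "a = (L0 + L1 * norm (g y)) * d"
  define b where "b = L1 * d"
  have bpos: "b > 0" using dpos L1 by (simp add: b_def)
  have a0: "a \<ge> 0" using dpos L0 L1 by (simp add: a_def)
  define z where "z = (\<lambda>s::real. y + s *\<^sub>R (x - y))"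
  define G where "G = (\<lambda>s. g (z s))"
  define G' where "G' = (\<lambda>s. H (z s) (x - y))"
  have bl: "\<And>u. bounded_linear (H u)" using der has_derivative_bounded_linear by blast
  have Gder: "(G has_derivative (\<lambda>h. h *\<^sub>R G' s)) (at s)" for s
  proof -
    have zd: "(z has_derivative (\<lambda>h. h *\<^sub>R (x - y))) (at s)"
      unfolding z_def by (auto intro!: derivative_eq_intros)
    have "((\<lambda>s. g (z s)) has_derivative (\<lambda>h. H (z s) (h *\<^sub>R (x - y)))) (at s)"
      using has_derivative_compose[OF zd der] by (simp add: o_def)
    moreover have "(\<lambda>h. H (z s) (h *\<^sub>R (x - y))) = (\<lambda>h. h *\<^sub>R G' s)"
      using bl by (simp add: G'_def linear_simps(5))
    ultimately show ?thesis by (simp add: G_def)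
  qed
  have G'b: "norm (G' s) \<le> a + b * norm (G s - G 0)" for s
  proof -
    have "norm (G' s) \<le> onorm (H (z s)) * d" unfolding G'_def d_def by (rule onorm[OF bl])
    also have "\<dots> \<le> (L0 + L1 * norm (g (z s))) * d" using hb dpos by (simp add: mult_right_mono)
    also have "\<dots> \<le> (L0 + L1 * (norm (g y) + norm (G s - G 0))) * d"
    proof -
      have "norm (g (z s)) \<le> norm (g y) + norm (G s - G 0)"
        using norm_triangle_ineq[of "g y" "G s - G 0"] by (simp add: G_def z_def)
      then show ?thesis using dpos L1 by (intro mult_right_mono) auto
    qed
    also have "\<dots> = a + b * norm (G s - G 0)" by (simp add: a_def b_def algebra_simps)
    finally show ?thesis .
  qed
  have main: "norm (G 1 - G 0) \<le> exp b * e + a * (exp b - 1) / b" if e: "e > 0" for e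
  proof -
    define w where "w = (\<lambda>s. G s - G 0)"
    define v where "v = (\<lambda>s. sqrt (e\<^sup>2 + w s \<bullet> w s))"
    define psi where "psi = (\<lambda>s. exp (- b * s) * (b * v s + a))"
    have vpos: "v s > 0" for s unfolding v_def using e by (intro real_sqrt_gt_zero add_pos_nonneg) auto
    have wv: "norm (w s) \<le> v s" for s
      unfolding v_def by (rule real_le_rsqrt) (simp add: power2_norm_eq_inner)
    have wder: "(w has_derivative (\<lambda>h. h *\<^sub>R G' s)) (at s)" for s
      unfolding w_def using Gder[of s] by (auto intro!: derivative_eq_intros)
    have qder: "((\<lambda>s. w s \<bullet> w s) has_real_derivative 2 * (w s \<bullet> G' s)) (at s)" for s
    proof -
      have "((\<lambda>s. w s \<bullet> w s) has_derivative (\<lambda>h. w s \<bullet> (h *\<^sub>R G' s) + (h *\<^sub>R G' s) \<bullet> w s)) (at s)"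
        by (rule has_derivative_inner[OF wder wder])
      moreover have "(\<lambda>h. w s \<bullet> (h *\<^sub>R G' s) + (h *\<^sub>R G' s) \<bullet> w s) = (*) (2 * (w s \<bullet> G' s))"
        by (auto simp: inner_commute algebra_simps)
      ultimately show ?thesis by (simp add: has_field_derivative_def)
    qed
    have vder: "(v has_real_derivative (w s \<bullet> G' s) / v s) (at s)" for s
    proof -
      have "((\<lambda>s. e\<^sup>2 + w s \<bullet> w s) has_real_derivative 2 * (w s \<bullet> G' s)) (at s)"
        using qder[of s] by (auto intro!: derivative_eq_intros)
      from DERIV_chain2[OF DERIV_real_sqrt this] vpos[of s]
      show ?thesis unfolding v_def by (simp add: field_simps)
    qed
    have vd_le: "(w s \<bullet> G' s) / v s \<le> a + b * v s" for s
    proof -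
      have "(w s \<bullet> G' s) \<le> norm (w s) * norm (G' s)" by (rule Cauchy_Schwarz_ineq2[THEN order_trans[OF abs_ge_self]])
      also have "\<dots> \<le> v s * norm (G' s)" using wv[of s] by (simp add: mult_right_mono)
      finally have "(w s \<bullet> G' s) / v s \<le> norm (G' s)" using vpos[of s] by (simp add: divide_le_eq mult.commute)
      also have "\<dots> \<le> a + b * norm (w s)" using G'b[of s] by (simp add: w_def)
      also have "\<dots> \<le> a + b * v s" using wv[of s] bpos by simp
      finally show ?thesis .
    qed
    have "psi 1 \<le> psi 0"
    proof (rule DERIV_nonpos_imp_nonincreasing[of 0 1 psi])
      fix s :: real
      have "(psi has_real_derivative
              (- b) * exp (- b * s) * (b * v s + a) + exp (- b * s) * (b * ((w s \<bullet> G' s) / v s))) (at s)"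
        unfolding psi_def by (auto intro!: derivative_eq_intros vder)
      moreover have "(- b) * exp (- b * s) * (b * v s + a) + exp (- b * s) * (b * ((w s \<bullet> G' s) / v s)) \<le> 0"
      proof -
        have "b * ((w s \<bullet> G' s) / v s) \<le> b * (a + b * v s)" using mult_left_mono[OF vd_le[of s], of b] bpos by simp
        then have "exp (- b * s) * (b * ((w s \<bullet> G' s) / v s)) \<le> exp (- b * s) * (b * (a + b * v s))"
          by (rule mult_left_mono) simp
        then show ?thesis by (simp add: algebra_simps)
      qed
      ultimately show "\<exists>y. (psi has_real_derivative y) (at s) \<and> y \<le> 0" by blast
    qed simp
    then have "exp (- b) * (b * v 1 + a) \<le> b * e + a"
      using e by (simp add: psi_def v_def w_def)
    then have "b * v 1 + a \<le> exp b * (b * e + a)"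
      by (simp add: exp_minus field_simps)
    then have "v 1 \<le> exp b * e + a * (exp b - 1) / b" using bpos
      by (simp add: field_simps)
    then show ?thesis using wv[of 1] by (simp add: w_def)
  qed
  have "norm (G 1 - G 0) \<le> a * (exp b - 1) / b"
  proof (rule field_le_epsilon)
    fix e :: real assume "e > 0"
    then have "e / exp b > 0" by simp
    from main[OF this] show "norm (G 1 - G 0) \<le> a * (exp b - 1) / b + e" by simp
  qed
  moreover have "G 1 = g x" "G 0 = g y" by (simp_all add: G_def z_def)
  moreover have "a * (exp b - 1) / b = (L0 + L1 * norm (g y)) * (exp (L1 * norm (x - y)) - 1) / L1"
    using dpos by (simp add: a_def b_def d_def)
  ultimately show ?thesis by simp
qed


lemma exp_chord:
  fixes z C :: real
  assumes "0 \<le> z" "z \<le> C" "0 < C"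
  shows "exp z - 1 \<le> z / C * (exp C - 1)"
proof -
  have t: "0 \<le> z / C" "z / C \<le> 1" using assms by auto
  have "exp ((1 - z / C) *\<^sub>R 0 + (z / C) *\<^sub>R C) \<le> (1 - z / C) * exp 0 + (z / C) * exp C"
    by (rule convex_onD[OF exp_convex t]) auto
  moreover have "(1 - z / C) *\<^sub>R 0 + (z / C) *\<^sub>R C = z" using assms by simp
  ultimately show ?thesis by (simp add: algebra_simps)
qed

lemma B_le_A:
  fixes C :: real
  assumes "0 < C"
  shows "(exp C - 1) / C \<le> 1 + exp C - (exp C - 1) / C"
proof -
  define h where "h = (\<lambda>c::real. c * (1 + exp c) - 2 * (exp c - 1))"
  have "h 0 \<le> h C"
  proof (rule DERIV_nonneg_imp_nondecreasing[of 0 C h])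
    fix c :: real assume c: "0 \<le> c" "c \<le> C"
    have "(h has_real_derivative (1 + exp c) + c * exp c - 2 * exp c) (at c)"
      unfolding h_def by (auto intro!: derivative_eq_intros)
    moreover have "(1 + exp c) + c * exp c - 2 * exp c \<ge> 0"
    proof -
      have "exp (- c) \<ge> 1 - c" using exp_ge_add_one_self[of "-c"] by simp
      then have "exp c * exp (- c) \<ge> exp c * (1 - c)" by (intro mult_left_mono) auto
      then have "1 \<ge> exp c * (1 - c)" by (simp add: exp_minus)
      then show ?thesis by (simp add: algebra_simps)
    qed
    ultimately show "\<exists>y. (h has_real_derivative y) (at c) \<and> 0 \<le> y" by blast
  qed (use assms in simp)
  then have "2 * (exp C - 1) \<le> C * (1 + exp C)" by (simp add: h_def)
  then have "(2 * (exp C - 1)) / C \<le> (C * (1 + exp C)) / C"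
    by (rule divide_right_mono) (use assms in simp)
  then show ?thesis using assms by simp
qed

lemma smooth_bound:
  fixes g :: "'a::euclidean_space \<Rightarrow> 'a" and H :: "'a \<Rightarrow> 'a \<Rightarrow> 'a"
  assumes der: "\<And>x. (g has_derivative H x) (at x)"
    and hb: "\<And>x. onorm (H x) \<le> L0 + L1 * norm (g x)"
    and L0: "L0 \<ge> 0" and L1: "L1 > 0" and C: "C \<ge> 1"
    and dC: "norm (x - y) \<le> C / L1"
  shows "norm (g x - g y) \<le> ((1 + exp C - (exp C - 1) / C) * L0
            + ((exp C - 1) / C) * L1 * norm (g y)) * norm (x - y)"
proof -
  let ?d = "norm (x - y)"
  have z: "0 \<le> L1 * ?d" "L1 * ?d \<le> C" using dC L1 by (auto simp: field_simps)
  have w0: "L0 + L1 * norm (g y) \<ge> 0" using L0 L1 by simp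
  have "norm (g x - g y) \<le> (L0 + L1 * norm (g y)) * (exp (L1 * ?d) - 1) / L1"
    by (rule gronwall_grad[OF der hb L0 L1])
  also have "\<dots> \<le> (L0 + L1 * norm (g y)) * (L1 * ?d / C * (exp C - 1)) / L1"
    using exp_chord[OF z] C w0 L1 by (intro divide_right_mono mult_left_mono) auto
  also have "\<dots> = (L0 + L1 * norm (g y)) * ((exp C - 1) / C) * ?d"
    using L1 by simp
  also have "\<dots> \<le> ((1 + exp C - (exp C - 1) / C) * L0 + ((exp C - 1) / C) * L1 * norm (g y)) * ?d"
  proof -
    have "(exp C - 1) / C * L0 \<le> (1 + exp C - (exp C - 1) / C) * L0"
      using B_le_A[of C] C L0 by (intro mult_right_mono) auto
    then show ?thesis by (intro mult_right_mono) (auto simp: algebra_simps)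
  qed
  finally show ?thesis .
qed




lemma epi_loc_Suc':
  "epi_loc N I \<eta> \<gamma> gF xt xs r xb i (Suc k) =
    (if norm (epi_G N gF xt r xb) \<le> \<gamma> / \<eta>
     then epi_loc N I \<eta> \<gamma> gF xt xs r xb i k - \<eta> *\<^sub>R (gF i (epi_loc N I \<eta> \<gamma> gF xt xs r xb i k) (xs (r * I + k) i) - gF i xb (xt r i) + epi_G N gF xt r xb)
     else epi_loc N I \<eta> \<gamma> gF xt xs r xb i k - (\<gamma> / norm (gF i (epi_loc N I \<eta> \<gamma> gF xt xs r xb i k) (xs (r * I + k) i) - gF i xb (xt r i) + epi_G N gF xt r xb)) *\<^sub>R (gF i (epi_loc N I \<eta> \<gamma> gF xt xs r xb i k) (xs (r * I + k) i) - gF i xb (xt r i) + epi_G N gF xt r xb))"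
  by (simp add: Let_def)

lemma norm_step: "u = y - v \<Longrightarrow> norm (u - z) = norm ((y - z) - (v::'a::real_normed_vector))"
  by (simp add: diff_diff_eq add.commute)

lemma clip_bound:
  assumes "\<gamma> > 0" "\<not> norm (epi_G N gF xt r xb) \<le> \<gamma> / \<eta>"
  shows "norm (epi_loc N I \<eta> \<gamma> gF xt xs r xb i k - xb) \<le> \<gamma> * real k"
proof (induction k)
  case 0 then show ?case by simp
next
  case (Suc k)
  let ?y = "epi_loc N I \<eta> \<gamma> gF xt xs r xb i k"
  let ?g = "gF i ?y (xs (r * I + k) i) - gF i xb (xt r i) + epi_G N gF xt r xb"
  have st: "norm ((\<gamma> / norm ?g) *\<^sub>R ?g) \<le> \<gamma>"
    using assms(1) by (cases "?g = 0") auto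
  have "epi_loc N I \<eta> \<gamma> gF xt xs r xb i (Suc k) = ?y - (\<gamma> / norm ?g) *\<^sub>R ?g"
    by (subst epi_loc_Suc') (simp only: assms(2) if_False)
  then have "norm (epi_loc N I \<eta> \<gamma> gF xt xs r xb i (Suc k) - xb) = norm ((?y - xb) - (\<gamma> / norm ?g) *\<^sub>R ?g)"
    by (rule norm_step)
  also have "\<dots> \<le> norm (?y - xb) + norm ((\<gamma> / norm ?g) *\<^sub>R ?g)" by (rule norm_triangle_ineq4)
  also have "\<dots> \<le> \<gamma> * real k + \<gamma>" using Suc st by linarith
  finally show ?case by (simp add: algebra_simps)
qed

lemma norm4: "norm ((a::'a::real_normed_vector) + b + c + d) \<le> norm a + norm b + norm c + norm d"
  using norm_triangle_ineq[of "a+b+c" d] norm_triangle_ineq[of "a+b" c] norm_triangle_ineq[of a b] by linarith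

lemma det_main:
  fixes gF :: "nat \<Rightarrow> 'a::euclidean_space \<Rightarrow> 'b \<Rightarrow> 'a" and gf :: "nat \<Rightarrow> 'a \<Rightarrow> 'a"
    and Hf :: "nat \<Rightarrow> 'a \<Rightarrow> 'a \<Rightarrow> 'a"
  assumes N_pos: "N \<ge> 1" and eta_pos: "\<eta> > 0" and gamma_pos: "\<gamma> > 0"
    and L0_nn: "L0 \<ge> 0" and L1_pos: "L1 > 0"
    and sigma_nn: "\<sigma> \<ge> 0" and kappa_nn: "\<kappa> \<ge> 0" and rho_ge: "\<rho> \<ge> 1"
    and f_hess: "\<And>x. (gf i has_derivative Hf i x) (at x)"
    and smooth: "\<And>x. onorm (Hf i x) \<le> L0 + L1 * norm (gf i x)"
    and hetero: "norm (gf i xb) \<le> \<kappa> + \<rho> * norm ((1 / real N) *\<^sub>R (\<Sum>l<N. gf l xb))"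
    and C_ge: "C \<ge> 1"
    and cond1: "2 * \<eta> * real I * ((1 + exp C - (exp C - 1) / C) * L0
                 + ((exp C - 1) / C) * L1 * \<kappa>
                 + ((exp C - 1) / C) * L1 * \<rho> * (\<sigma> + \<gamma> / \<eta>)) \<le> 1"
    and cond2: "2 * \<eta> * real I * (2 * \<sigma> + \<gamma> / \<eta>) \<le> C / L1"
    and k_le: "k \<le> I" and i_lt: "i < N"
    and H1: "\<forall>j<N. norm (gF j xb (xt r j) - gf j xb) \<le> \<sigma>"
    and H2: "\<forall>m<k. norm (gF i (epi_loc N I \<eta> \<gamma> gF xt xs r xb i m) (xs (r * I + m) i)
                  - gf i (epi_loc N I \<eta> \<gamma> gF xt xs r xb i m)) \<le> \<sigma>"
    and Ar: "norm (epi_G N gF xt r xb) \<le> \<gamma> / \<eta>"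
  shows "norm (epi_loc N I \<eta> \<gamma> gF xt xs r xb i k - xb) \<le> 2 * \<eta> * real I * (2 * \<sigma> + \<gamma> / \<eta>)"
proof -
  let ?Gr = "epi_G N gF xt r xb"
  let ?x = "\<lambda>m. epi_loc N I \<eta> \<gamma> gF xt xs r xb i m"
  define S where "S = 2 * \<sigma> + \<gamma> / \<eta>"
  have S0: "S \<ge> 0" using sigma_nn eta_pos gamma_pos by (simp add: S_def)
  define A where "A = 1 + exp C - (exp C - 1) / C"
  define B where "B = (exp C - 1) / C"
  have B0: "B \<ge> 0" using C_ge by (simp add: B_def)
  have Nr: "real N > 0" using N_pos by simp
  have avg: "norm ((1 / real N) *\<^sub>R (\<Sum>l<N. gf l xb)) \<le> \<sigma> + \<gamma> / \<eta>"
  proof -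
    have eq: "(1 / real N) *\<^sub>R (\<Sum>l<N. gf l xb) = (1 / real N) *\<^sub>R (\<Sum>l<N. gf l xb - gF l xb (xt r l)) + ?Gr"
      by (simp add: epi_G_def sum_subtractf algebra_simps)
    have "norm ((1 / real N) *\<^sub>R (\<Sum>l<N. gf l xb - gF l xb (xt r l))) \<le> (1 / real N) * (\<Sum>l<N. norm (gf l xb - gF l xb (xt r l)))"
      using Nr norm_sum[of "\<lambda>l. gf l xb - gF l xb (xt r l)" "{..<N}"] by (simp add: divide_right_mono)
    also have "\<dots> \<le> (1 / real N) * (\<Sum>l<N. \<sigma>)"
      using H1 Nr by (intro mult_left_mono sum_mono) (auto simp: norm_minus_commute)
    also have "\<dots> = \<sigma>" using Nr by simp
    finally show ?thesis using Ar eq norm_triangle_ineq[of "(1 / real N) *\<^sub>R (\<Sum>l<N. gf l xb - gF l xb (xt r l))" ?Gr]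
      by simp
  qed
  have u0: "norm (gf i xb) \<le> \<kappa> + \<rho> * (\<sigma> + \<gamma> / \<eta>)"
  proof -
    have "\<rho> * norm ((1 / real N) *\<^sub>R (\<Sum>l<N. gf l xb)) \<le> \<rho> * (\<sigma> + \<gamma> / \<eta>)"
      by (rule mult_left_mono[OF avg]) (use rho_ge in simp)
    then show ?thesis using hetero by linarith
  qed
  have key: "2 * \<eta> * real I * (A * L0 + B * L1 * norm (gf i xb)) \<le> 1"
  proof -
    have "B * L1 * norm (gf i xb) \<le> B * L1 * (\<kappa> + \<rho> * (\<sigma> + \<gamma> / \<eta>))"
      using u0 B0 L1_pos by (intro mult_left_mono) auto
    then have "A * L0 + B * L1 * norm (gf i xb) \<le> A * L0 + B * L1 * \<kappa> + B * L1 * \<rho> * (\<sigma> + \<gamma> / \<eta>)"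
      by (simp add: algebra_simps)
    then have "2 * \<eta> * real I * (A * L0 + B * L1 * norm (gf i xb)) \<le> 2 * \<eta> * real I * (A * L0 + B * L1 * \<kappa> + B * L1 * \<rho> * (\<sigma> + \<gamma> / \<eta>))"
      using eta_pos by (intro mult_left_mono) auto
    then show ?thesis using cond1 by (simp add: A_def B_def)
  qed
  have step: "\<forall>m\<le>k. norm (?x m - xb) \<le> 2 * \<eta> * real m * S"
  proof (intro allI impI)
    fix m assume "m \<le> k"
    then show "norm (?x m - xb) \<le> 2 * \<eta> * real m * S"
    proof (induction m)
      case 0 then show ?case by simp
    next
      case (Suc m)
      then have mk: "m < k" and IH: "norm (?x m - xb) \<le> 2 * \<eta> * real m * S" by auto
      have mI: "real m \<le> real I" using mk k_le by simp
      have dR: "norm (?x m - xb) \<le> 2 * \<eta> * real I * S"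
      proof -
        have "real m * S \<le> real I * S" by (rule mult_right_mono[OF mI S0])
        then have "(2 * \<eta>) * (real m * S) \<le> (2 * \<eta>) * (real I * S)"
          by (rule mult_left_mono) (use eta_pos in simp)
        then show ?thesis using IH by (simp add: mult.assoc)
      qed
      have dC: "norm (?x m - xb) \<le> C / L1" using dR cond2 by (simp add: S_def)
      have "norm (gf i (?x m) - gf i xb) \<le> (A * L0 + B * L1 * norm (gf i xb)) * norm (?x m - xb)"
        unfolding A_def B_def by (rule smooth_bound[OF f_hess smooth L0_nn L1_pos C_ge dC])
      also have "\<dots> \<le> (A * L0 + B * L1 * norm (gf i xb)) * (2 * \<eta> * real I * S)"
      proof (rule mult_left_mono[OF dR])
        have "B \<le> A" using B_le_A[of C] C_ge unfolding A_def B_def by simp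
        then have "A \<ge> 0" using B0 by linarith
        then show "0 \<le> A * L0 + B * L1 * norm (gf i xb)" using B0 L0_nn L1_pos by simp
      qed
      also have "\<dots> = (2 * \<eta> * real I * (A * L0 + B * L1 * norm (gf i xb))) * S" by simp
      also have "\<dots> \<le> S" using mult_left_le[OF key S0] by (simp add: mult.commute)
      finally have gd: "norm (gf i (?x m) - gf i xb) \<le> S" .
      let ?g = "gF i (?x m) (xs (r * I + m) i) - gF i xb (xt r i) + ?Gr"
      have "?g = (gF i (?x m) (xs (r * I + m) i) - gf i (?x m)) + (gf i (?x m) - gf i xb) + (gf i xb - gF i xb (xt r i)) + ?Gr"
        by simp
      note eqg = this
      have "norm ?g \<le> norm (gF i (?x m) (xs (r * I + m) i) - gf i (?x m)) + norm (gf i (?x m) - gf i xb) + norm (gf i xb - gF i xb (xt r i)) + norm ?Gr"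
        unfolding eqg by (rule norm4)
      moreover have "norm (gF i (?x m) (xs (r * I + m) i) - gf i (?x m)) \<le> \<sigma>" using H2 mk by auto
      moreover have "norm (gf i xb - gF i xb (xt r i)) \<le> \<sigma>"
        using H1 i_lt by (simp add: norm_minus_commute)
      ultimately have gb: "norm ?g \<le> 2 * S" using gd Ar by (simp add: S_def)
      have "?x (Suc m) = ?x m - \<eta> *\<^sub>R ?g"
        by (subst epi_loc_Suc') (simp only: Ar if_True)
      then have "norm (?x (Suc m) - xb) = norm ((?x m - xb) - \<eta> *\<^sub>R ?g)"
        by (rule norm_step)
      also have "\<dots> \<le> norm (?x m - xb) + \<eta> * norm ?g"
        using norm_triangle_ineq4[of "?x m - xb" "\<eta> *\<^sub>R ?g"] eta_pos by simp
      also have "\<dots> \<le> 2 * \<eta> * real m * S + \<eta> * (2 * S)"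
      proof -
        have "\<eta> * norm ?g \<le> \<eta> * (2 * S)" by (rule mult_left_mono[OF gb]) (use eta_pos in simp)
        then show ?thesis using IH by linarith
      qed
      also have "\<dots> = 2 * \<eta> * real (Suc m) * S" by (simp add: algebra_simps)
      finally show ?case .
    qed
  qed
  then have "norm (?x k - xb) \<le> 2 * \<eta> * real k * S" by simp
  also have "\<dots> \<le> 2 * \<eta> * real I * S" using k_le eta_pos S0 by (intro mult_right_mono mult_left_mono) auto
  finally show ?thesis by (simp add: S_def)
qed




definition grid :: "nat \<Rightarrow> 'a::euclidean_space \<Rightarrow> 'a" where
  "grid n x = (\<Sum>b\<in>Basis. (real_of_int \<lfloor>real (Suc n) * (x \<bullet> b)\<rfloor> / real (Suc n)) *\<^sub>R b)"

lemma grid_meas: "grid n \<in> borel_measurable borel"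
  unfolding grid_def by measurable

lemma grid_countable: "countable (range (grid n :: 'a::euclidean_space \<Rightarrow> 'a))"
proof -
  let ?Q = "(\<lambda>z. \<Sum>b\<in>Basis. (real_of_int (z b) / real (Suc n)) *\<^sub>R b) ` (Basis \<rightarrow>\<^sub>E (UNIV::int set)) :: 'a set"
  have "countable ?Q" by (intro countable_image countable_PiE) auto
  moreover have "range (grid n) \<subseteq> ?Q"
  proof
    fix y assume "y \<in> range (grid n :: 'a \<Rightarrow> 'a)"
    then obtain x where x: "y = grid n x" by auto
    show "y \<in> ?Q"
      by (rule image_eqI[of _ _ "restrict (\<lambda>b. \<lfloor>real (Suc n) * (x \<bullet> b)\<rfloor>) Basis"])
         (auto simp: x grid_def intro!: sum.cong)
  qed
  ultimately show ?thesis by (rule countable_subset[rotated])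
qed

lemma grid_meas_count: "grid n \<in> measurable borel (count_space (range (grid n :: 'a::euclidean_space \<Rightarrow> 'a)))"
proof (subst measurable_count_space_eq_countable[OF grid_countable], intro conjI ballI)
  show "grid n \<in> space borel \<rightarrow> range (grid n)" by auto
  fix a :: 'a
  have "grid n -` {a} \<inter> space borel = grid n -` {a} \<inter> space borel" ..
  then show "grid n -` {a} \<inter> space borel \<in> sets borel"
    using measurable_sets[OF grid_meas, of "{a}"] by auto
qed

lemma floor_approx:
  fixes c y :: real assumes c: "c > 0"
  shows "\<bar>real_of_int \<lfloor>c * y\<rfloor> / c - y\<bar> \<le> 1 / c"
proof -
  have e: "real_of_int \<lfloor>c * y\<rfloor> / c - y = (real_of_int \<lfloor>c * y\<rfloor> - c * y) / c"
    using c by (simp add: field_simps)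
  have "\<bar>real_of_int \<lfloor>c * y\<rfloor> - c * y\<bar> \<le> 1" by linarith
  then show ?thesis unfolding e using c by (simp add: abs_divide divide_right_mono)
qed

lemma grid_lim: "(\<lambda>n. grid n x) \<longlonglongrightarrow> (x::'a::euclidean_space)"
proof (rule LIM_zero_cancel, rule Lim_null_comparison)
  show "(\<lambda>n. real DIM('a) / real (Suc n)) \<longlonglongrightarrow> 0"
    using LIMSEQ_Suc[OF lim_const_over_n[of "real DIM('a)"]] by simp
  show "\<forall>\<^sub>F n in sequentially. norm (grid n x - x) \<le> real DIM('a) / real (Suc n)"
  proof (intro always_eventually allI)
    fix n
    let ?c = "real (Suc n)"
    have "grid n x - x = (\<Sum>b\<in>Basis. (real_of_int \<lfloor>?c * (x \<bullet> b)\<rfloor> / ?c - x \<bullet> b) *\<^sub>R b)"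
      by (subst (2) euclidean_representation[symmetric]) (simp add: grid_def sum_subtractf scaleR_diff_left)
    then have "norm (grid n x - x) \<le> (\<Sum>b\<in>Basis. norm ((real_of_int \<lfloor>?c * (x \<bullet> b)\<rfloor> / ?c - x \<bullet> b) *\<^sub>R b))"
      by (simp only: norm_sum)
    also have "\<dots> \<le> (\<Sum>b\<in>(Basis::'a set). 1 / ?c)"
    proof (rule sum_mono)
      fix b :: 'a assume "b \<in> Basis"
      have "\<bar>real_of_int \<lfloor>?c * (x \<bullet> b)\<rfloor> / ?c - x \<bullet> b\<bar> \<le> 1 / ?c"
        by (rule floor_approx) simp
      then show "norm ((real_of_int \<lfloor>?c * (x \<bullet> b)\<rfloor> / ?c - x \<bullet> b) *\<^sub>R b) \<le> 1 / ?c"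
        using \<open>b \<in> Basis\<close> by simp
    qed
    also have "\<dots> = real DIM('a) / ?c" by simp
    finally show "norm (grid n x - x) \<le> real DIM('a) / ?c" .
  qed
qed

lemma carath_meas:
  fixes F :: "'a::euclidean_space \<Rightarrow> 'b \<Rightarrow> real"
  assumes Fm: "\<And>x. F x \<in> borel_measurable Dm"
    and Fc: "\<And>s. s \<in> space Dm \<Longrightarrow> continuous_on UNIV (\<lambda>x. F x s)"
  shows "(\<lambda>z. F (fst z) (snd z)) \<in> borel_measurable (borel \<Otimes>\<^sub>M Dm)"
proof (rule borel_measurable_LIMSEQ_metric)
  fix n
  show "(\<lambda>z. F (grid n (fst z)) (snd z)) \<in> borel_measurable (borel \<Otimes>\<^sub>M Dm)"
  proof (rule measurable_compose_countable'[where g = "\<lambda>z. grid n (fst z)" and I = "range (grid n)"])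
    fix a assume "a \<in> range (grid n :: 'a \<Rightarrow> 'a)"
    show "(\<lambda>z. F a (snd z)) \<in> borel_measurable (borel \<Otimes>\<^sub>M Dm)"
      using measurable_compose[OF measurable_snd[of borel Dm] Fm[of a]] by (simp add: o_def)
  next
    show "(\<lambda>z. grid n (fst z)) \<in> measurable (borel \<Otimes>\<^sub>M Dm) (count_space (range (grid n)))"
      using measurable_compose[OF measurable_fst grid_meas_count] by simp
  next
    show "countable (range (grid n :: 'a \<Rightarrow> 'a))" by (rule grid_countable)
  qed
next
  fix z :: "'a \<times> 'b" assume "z \<in> space (borel \<Otimes>\<^sub>M Dm)"
  then have s: "snd z \<in> space Dm" by (auto simp: space_pair_measure)
  have "isCont (\<lambda>x. F x (snd z)) (fst z)"
    using Fc[OF s] by (simp add: continuous_on_eq_continuous_at)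
  then show "(\<lambda>n. F (grid n (fst z)) (snd z)) \<longlonglongrightarrow> F (fst z) (snd z)"
    using isCont_tendsto_compose grid_lim by blast
qed


lemma inv_Suc_at0: "filterlim (\<lambda>n. 1 / real (Suc n)) (at (0::real)) sequentially"
proof (subst filterlim_at, intro conjI)
  show "\<forall>\<^sub>F n in sequentially. 1 / real (Suc n) \<in> UNIV \<and> 1 / real (Suc n) \<noteq> 0" by simp
  show "(\<lambda>n. 1 / real (Suc n)) \<longlonglongrightarrow> 0"
    using LIMSEQ_Suc[OF lim_const_over_n[of "1::real"]] by simp
qed

lemma gF_joint_meas:
  fixes F :: "'a::euclidean_space \<Rightarrow> 'b \<Rightarrow> real" and gF :: "'a \<Rightarrow> 'b \<Rightarrow> 'a"
  assumes Fm: "\<And>x. F x \<in> borel_measurable Dm"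
    and Fd: "\<And>x s. s \<in> space Dm \<Longrightarrow> ((\<lambda>y. F y s) has_derivative (\<lambda>h. gF x s \<bullet> h)) (at x)"
  shows "(\<lambda>z. gF (fst z) (snd z)) \<in> borel_measurable (borel \<Otimes>\<^sub>M Dm)"
proof -
  have Fj: "(\<lambda>z. F (fst z) (snd z)) \<in> borel_measurable (borel \<Otimes>\<^sub>M Dm)"
  proof (rule carath_meas[OF Fm])
    fix s assume s: "s \<in> space Dm"
    show "continuous_on UNIV (\<lambda>x. F x s)"
      using has_derivative_continuous[OF Fd[OF s]] by (simp add: continuous_on_eq_continuous_at)
  qed
  have comp: "(\<lambda>z. gF (fst z) (snd z) \<bullet> b) \<in> borel_measurable (borel \<Otimes>\<^sub>M Dm)" for b
  proof (rule borel_measurable_LIMSEQ_real[where u = "\<lambda>n z. (F (fst z + (1 / real (Suc n)) *\<^sub>R b) (snd z) - F (fst z) (snd z)) * real (Suc n)"])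
    fix n
    have sh: "(\<lambda>z. (fst z + (1 / real (Suc n)) *\<^sub>R b, snd z)) \<in> measurable (borel \<Otimes>\<^sub>M Dm) (borel \<Otimes>\<^sub>M Dm)"
      by measurable
    have "(\<lambda>z. F (fst z + (1 / real (Suc n)) *\<^sub>R b) (snd z)) \<in> borel_measurable (borel \<Otimes>\<^sub>M Dm)"
      using measurable_compose[OF sh Fj] by simp
    then show "(\<lambda>z. (F (fst z + (1 / real (Suc n)) *\<^sub>R b) (snd z) - F (fst z) (snd z)) * real (Suc n)) \<in> borel_measurable (borel \<Otimes>\<^sub>M Dm)"
      using Fj by measurable
  next
    fix z :: "'a \<times> 'b" assume "z \<in> space (borel \<Otimes>\<^sub>M Dm)"
    then have s: "snd z \<in> space Dm" by (auto simp: space_pair_measure)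
    define x where "x = fst z"
    define f where "f = (\<lambda>t::real. F (x + t *\<^sub>R b) (snd z))"
    have "(f has_real_derivative (gF x (snd z) \<bullet> b)) (at 0)"
    proof -
      have l: "((\<lambda>t::real. x + t *\<^sub>R b) has_derivative (\<lambda>t. t *\<^sub>R b)) (at 0)"
        by (auto intro!: derivative_eq_intros)
      have "(f has_derivative (\<lambda>t. gF x (snd z) \<bullet> (t *\<^sub>R b))) (at 0)"
        using has_derivative_compose[OF l, of "\<lambda>y. F y (snd z)" "\<lambda>h. gF x (snd z) \<bullet> h"] Fd[OF s, of x]
        by (simp add: f_def o_def)
      moreover have "(\<lambda>t. gF x (snd z) \<bullet> (t *\<^sub>R b)) = (*) (gF x (snd z) \<bullet> b)"
        by (auto simp: fun_eq_iff)
      ultimately show ?thesis by (simp add: has_field_derivative_def)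
    qed
    then have "((\<lambda>h. (f (0 + h) - f 0) / h) \<longlongrightarrow> gF x (snd z) \<bullet> b) (at 0)"
      by (simp add: DERIV_def)
    from filterlim_compose[OF this inv_Suc_at0]
    show "(\<lambda>n. (F (fst z + (1 / real (Suc n)) *\<^sub>R b) (snd z) - F (fst z) (snd z)) * real (Suc n)) \<longlonglongrightarrow> gF (fst z) (snd z) \<bullet> b"
      by (simp add: f_def x_def)
  qed
  have "(\<lambda>z. \<Sum>b\<in>Basis. (gF (fst z) (snd z) \<bullet> b) *\<^sub>R b) \<in> borel_measurable (borel \<Otimes>\<^sub>M Dm)"
    using comp by measurable
  then show ?thesis by (simp add: euclidean_representation)
qed




lemma epi_G_cong:
  assumes "\<And>j. j < N \<Longrightarrow> xt r j = xt' r j"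
  shows "epi_G N gF xt r xb = epi_G N gF xt' r xb"
  using assms by (simp add: epi_G_def)

lemma epi_loc_cong:
  assumes "\<And>j. j < N \<Longrightarrow> xt r j = xt' r j" "i < N"
    and "\<And>m. m < k \<Longrightarrow> xs (r * I + m) i = xs' (r * I + m) i"
  shows "epi_loc N I \<eta> \<gamma> gF xt xs r xb i k = epi_loc N I \<eta> \<gamma> gF xt' xs' r xb i k"
  using assms(3)
proof (induction k)
  case 0 then show ?case by simp
next
  case (Suc k)
  then have IH: "epi_loc N I \<eta> \<gamma> gF xt xs r xb i k = epi_loc N I \<eta> \<gamma> gF xt' xs' r xb i k" by simp
  have G: "epi_G N gF xt r xb = epi_G N gF xt' r xb" using assms(1) by (rule epi_G_cong)
  show ?case using Suc.prems[of k] IH G assms(1)[OF assms(2)] by (simp add: Let_def)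
qed

lemma epi_xbar_cong:
  assumes "\<And>q j. q < r \<Longrightarrow> j < N \<Longrightarrow> xt q j = xt' q j"
    and "\<And>t j. t < r * I \<Longrightarrow> j < N \<Longrightarrow> xs t j = xs' t j"
  shows "epi_xbar N I \<eta> \<gamma> gF xt xs x0 r = epi_xbar N I \<eta> \<gamma> gF xt' xs' x0 r"
  using assms
proof (induction r)
  case 0 then show ?case by simp
next
  case (Suc r)
  have IH: "epi_xbar N I \<eta> \<gamma> gF xt xs x0 r = epi_xbar N I \<eta> \<gamma> gF xt' xs' x0 r"
  proof (rule Suc.IH)
    fix q j assume "q < r" "j < N" then show "xt q j = xt' q j" using Suc.prems(1) by simp
  next
    fix t j assume "t < r * I" "j < N" then show "xs t j = xs' t j" using Suc.prems(2)[of t j] by simp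
  qed
  have "epi_loc N I \<eta> \<gamma> gF xt xs r xb i I = epi_loc N I \<eta> \<gamma> gF xt' xs' r xb i I" if "i < N" for i xb
  proof (rule epi_loc_cong[OF _ that])
    fix j assume "j < N" then show "xt r j = xt' r j" using Suc.prems(1) by simp
  next
    fix m assume "m < I" then show "xs (r * I + m) i = xs' (r * I + m) i" using Suc.prems(2) that by simp
  qed
  then show ?case using IH by simp
qed

definition Msp :: "(nat \<Rightarrow> 'b measure) \<Rightarrow> (nat \<times> nat) + (nat \<times> nat) \<Rightarrow> 'b measure" where
  "Msp D = (\<lambda>a. case a of Inl (q, j) \<Rightarrow> D j | Inr (t, j) \<Rightarrow> D j)"

lemma Msp_simps[simp]: "Msp D (Inl (q, j)) = D j" "Msp D (Inr (t, j)) = D j"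
  by (simp_all add: Msp_def)

lemma comp_Inl: "Inl (q, j) \<in> K \<Longrightarrow> (\<lambda>p. p (Inl (q, j))) \<in> measurable (PiM K (Msp D)) (D j)"
  using measurable_component_singleton[of "Inl (q, j)" K "Msp D"] by simp

lemma comp_Inr: "Inr (t, j) \<in> K \<Longrightarrow> (\<lambda>p. p (Inr (t, j))) \<in> measurable (PiM K (Msp D)) (D j)"
  using measurable_component_singleton[of "Inr (t, j)" K "Msp D"] by simp

lemma gF_comp:
  assumes gm: "(\<lambda>z. gF (fst z) (snd z)) \<in> borel_measurable (borel \<Otimes>\<^sub>M Dj)"
    and f: "f \<in> borel_measurable Mx" and h: "h \<in> measurable Mx Dj"
  shows "(\<lambda>x. gF (f x) (h x)) \<in> borel_measurable Mx"
  using measurable_compose[OF measurable_Pair[OF f h] gm] by simp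

lemma meas_G:
  fixes gF :: "nat \<Rightarrow> 'a::euclidean_space \<Rightarrow> 'b \<Rightarrow> 'a"
  assumes gm: "\<And>j. j < N \<Longrightarrow> (\<lambda>z. gF j (fst z) (snd z)) \<in> borel_measurable (borel \<Otimes>\<^sub>M D j)"
    and K: "\<And>j. j < N \<Longrightarrow> Inl (r, j) \<in> K"
    and xb: "xbf \<in> borel_measurable (PiM K (Msp D))"
  shows "(\<lambda>p. epi_G N gF (\<lambda>q j. p (Inl (q, j))) r (xbf p)) \<in> borel_measurable (PiM K (Msp D))"
proof -
  have "(\<lambda>p. gF j (xbf p) (p (Inl (r, j)))) \<in> borel_measurable (PiM K (Msp D))" if "j \<in> {..<N}" for j
    using that by (intro gF_comp[OF gm xb comp_Inl] K) auto
  then have "(\<lambda>p. \<Sum>j<N. gF j (xbf p) (p (Inl (r, j)))) \<in> borel_measurable (PiM K (Msp D))"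
    by (rule borel_measurable_sum)
  then show ?thesis unfolding epi_G_def by measurable
qed

lemma meas_loc:
  fixes gF :: "nat \<Rightarrow> 'a::euclidean_space \<Rightarrow> 'b \<Rightarrow> 'a"
  assumes gm: "\<And>j. j < N \<Longrightarrow> (\<lambda>z. gF j (fst z) (snd z)) \<in> borel_measurable (borel \<Otimes>\<^sub>M D j)"
    and K: "\<And>j. j < N \<Longrightarrow> Inl (r, j) \<in> K"
    and K2: "\<And>m. m < k \<Longrightarrow> Inr (r * I + m, i) \<in> K"
    and i: "i < N"
    and xb: "xbf \<in> borel_measurable (PiM K (Msp D))"
  shows "(\<lambda>p. epi_loc N I \<eta> \<gamma> gF (\<lambda>q j. p (Inl (q, j))) (\<lambda>t j. p (Inr (t, j))) r (xbf p) i k)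
           \<in> borel_measurable (PiM K (Msp D))"
  using K2
proof (induction k)
  case 0 then show ?case using xb by simp
next
  case (Suc k)
  let ?y = "\<lambda>p. epi_loc N I \<eta> \<gamma> gF (\<lambda>q j. p (Inl (q, j))) (\<lambda>t j. p (Inr (t, j))) r (xbf p) i k"
  let ?G = "\<lambda>p. epi_G N gF (\<lambda>q j. p (Inl (q, j))) r (xbf p)"
  let ?g = "\<lambda>p. gF i (?y p) (p (Inr (r * I + k, i))) - gF i (xbf p) (p (Inl (r, i))) + ?G p"
  have y: "?y \<in> borel_measurable (PiM K (Msp D))" using Suc by simp
  have G: "?G \<in> borel_measurable (PiM K (Msp D))" by (rule meas_G[OF gm K xb])
  have g1: "(\<lambda>p. gF i (?y p) (p (Inr (r * I + k, i)))) \<in> borel_measurable (PiM K (Msp D))"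
    by (rule gF_comp[OF gm[OF i] y comp_Inr[OF Suc.prems]]) simp
  have g2: "(\<lambda>p. gF i (xbf p) (p (Inl (r, i)))) \<in> borel_measurable (PiM K (Msp D))"
    by (rule gF_comp[OF gm[OF i] xb comp_Inl[OF K[OF i]]])
  have g: "?g \<in> borel_measurable (PiM K (Msp D))" using g1 g2 G by measurable
  have "(\<lambda>p. if norm (?G p) \<le> \<gamma> / \<eta> then ?y p - \<eta> *\<^sub>R ?g p else ?y p - (\<gamma> / norm (?g p)) *\<^sub>R ?g p)
          \<in> borel_measurable (PiM K (Msp D))"
    using y G g by measurable
  then show ?case by (simp add: Let_def)
qed

lemma meas_xbar:
  fixes gF :: "nat \<Rightarrow> 'a::euclidean_space \<Rightarrow> 'b \<Rightarrow> 'a"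
  assumes gm: "\<And>j. j < N \<Longrightarrow> (\<lambda>z. gF j (fst z) (snd z)) \<in> borel_measurable (borel \<Otimes>\<^sub>M D j)"
    and K: "\<And>q j. q < r \<Longrightarrow> j < N \<Longrightarrow> Inl (q, j) \<in> K"
    and K2: "\<And>t j. t < r * I \<Longrightarrow> j < N \<Longrightarrow> Inr (t, j) \<in> K"
  shows "(\<lambda>p. epi_xbar N I \<eta> \<gamma> gF (\<lambda>q j. p (Inl (q, j))) (\<lambda>t j. p (Inr (t, j))) x0 r)
           \<in> borel_measurable (PiM K (Msp D))"
  using K K2
proof (induction r)
  case 0 then show ?case by simp
next
  case (Suc r)
  let ?xb = "\<lambda>p. epi_xbar N I \<eta> \<gamma> gF (\<lambda>q j. p (Inl (q, j))) (\<lambda>t j. p (Inr (t, j))) x0 r"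
  have xb: "?xb \<in> borel_measurable (PiM K (Msp D))"
    using Suc.prems by (intro Suc.IH) auto
  have "(\<lambda>p. epi_loc N I \<eta> \<gamma> gF (\<lambda>q j. p (Inl (q, j))) (\<lambda>t j. p (Inr (t, j))) r (?xb p) i I)
           \<in> borel_measurable (PiM K (Msp D))" if "i \<in> {..<N}" for i
  proof (rule meas_loc[OF gm _ _ _ xb])
    show "\<And>j. j < N \<Longrightarrow> Inl (r, j) \<in> K" using Suc.prems(1) by simp
    show "\<And>m. m < I \<Longrightarrow> Inr (r * I + m, i) \<in> K" using Suc.prems(2) that by simp
    show "i < N" using that by simp
  qed
  then have "(\<lambda>p. \<Sum>i<N. epi_loc N I \<eta> \<gamma> gF (\<lambda>q j. p (Inl (q, j))) (\<lambda>t j. p (Inr (t, j))) r (?xb p) i I)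
           \<in> borel_measurable (PiM K (Msp D))" by (rule borel_measurable_sum)
  then show ?case by simp
qed




lemma AE_fresh:
  fixes X :: "'i \<Rightarrow> 'w \<Rightarrow> 'b" and \<phi> :: "('i \<Rightarrow> 'b) \<Rightarrow> 'a::euclidean_space"
  assumes Mp: "prob_space M"
    and ind: "prob_space.indep_vars M M' X II"
    and K: "K \<subseteq> II" and b: "b \<in> II" "b \<notin> K"
    and phi: "\<phi> \<in> borel_measurable (PiM K M')"
    and dist: "distr M (M' b) (X b) = M' b"
    and P: "(\<lambda>z. P (fst z) (snd z)) \<in> measurable (borel \<Otimes>\<^sub>M M' b) (count_space UNIV)"
    and ae: "\<And>x. AE s in M' b. P x s"
  shows "AE \<omega> in M. P (\<phi> (restrict (\<lambda>a. X a \<omega>) K)) (X b \<omega>)"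
proof -
  interpret prob_space M by fact
  define Z where "Z = (\<lambda>\<omega>. restrict (\<lambda>a. X a \<omega>) K)"
  define Zb where "Zb = (\<lambda>\<omega>. restrict (\<lambda>a. X a \<omega>) {b})"
  have iv: "indep_var (PiM K M') Z (PiM {b} M') Zb"
    unfolding Z_def Zb_def by (rule indep_var_restrict[OF ind]) (use K b in auto)
  then have rv: "random_variable (PiM K M') Z" "random_variable (PiM {b} M') Zb"
    and eq: "distr M (PiM K M') Z \<Otimes>\<^sub>M distr M (PiM {b} M') Zb = distr M (PiM K M' \<Otimes>\<^sub>M PiM {b} M') (\<lambda>\<omega>. (Z \<omega>, Zb \<omega>))"
    by (simp_all add: indep_var_distribution_eq)
  have Xb: "X b \<in> measurable M (M' b)"
  proof -
    have "(\<lambda>q. q b) \<in> measurable (PiM {b} M') (M' b)" by (rule measurable_component_singleton) simp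
    from measurable_compose[OF rv(2) this] show ?thesis by (simp add: Zb_def)
  qed
  interpret Yp: prob_space "distr M (PiM K M') Z" by (rule prob_space_distr[OF rv(1)])
  interpret Bp: prob_space "distr M (PiM {b} M') Zb" by (rule prob_space_distr[OF rv(2)])
  interpret pair_sigma_finite "distr M (PiM K M') Z" "distr M (PiM {b} M') Zb" ..
  have psi: "(\<lambda>z. (\<phi> (fst z), snd z b)) \<in> measurable (PiM K M' \<Otimes>\<^sub>M PiM {b} M') (borel \<Otimes>\<^sub>M M' b)"
  proof (rule measurable_Pair)
    show "(\<lambda>z. \<phi> (fst z)) \<in> borel_measurable (Pi\<^sub>M K M' \<Otimes>\<^sub>M Pi\<^sub>M {b} M')"
      using measurable_compose[OF measurable_fst[of "PiM K M'" "PiM {b} M'"] phi] by (simp add: o_def)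
    have "(\<lambda>q. q b) \<in> measurable (PiM {b} M') (M' b)" by (rule measurable_component_singleton) simp
    then show "(\<lambda>z. snd z b) \<in> measurable (Pi\<^sub>M K M' \<Otimes>\<^sub>M Pi\<^sub>M {b} M') (M' b)"
      using measurable_compose[OF measurable_snd[of "PiM K M'" "PiM {b} M'"]] by (simp add: o_def)
  qed
  have Q: "(\<lambda>z. P (\<phi> (fst z)) (snd z b)) \<in> measurable (PiM K M' \<Otimes>\<^sub>M PiM {b} M') (count_space UNIV)"
    using measurable_compose[OF psi P] by (simp add: o_def)
  have sp: "sets (distr M (PiM K M') Z \<Otimes>\<^sub>M distr M (PiM {b} M') Zb) = sets (PiM K M' \<Otimes>\<^sub>M PiM {b} M')"
    by (rule sets_pair_measure_cong) simp_all
  have Q': "{x \<in> space (distr M (PiM K M') Z \<Otimes>\<^sub>M distr M (PiM {b} M') Zb). P (\<phi> (fst x)) (snd x b)}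
      \<in> sets (distr M (PiM K M') Z \<Otimes>\<^sub>M distr M (PiM {b} M') Zb)"
  proof -
    have "(\<lambda>z. P (\<phi> (fst z)) (snd z b)) \<in> measurable (distr M (PiM K M') Z \<Otimes>\<^sub>M distr M (PiM {b} M') Zb) (count_space UNIV)"
      using Q by (simp only: measurable_cong_sets[OF sp refl])
    then show ?thesis by (simp add: Measurable.pred_def)
  qed
  have inner: "AE q in distr M (PiM {b} M') Zb. P (\<phi> p) (q b)" for p
  proof -
    have sec: "(\<lambda>s. P (\<phi> p) s) \<in> measurable (M' b) (count_space UNIV)"
      using measurable_compose[OF measurable_Pair1'[of "\<phi> p" borel "M' b"] P] by (simp add: o_def)
    have "AE s in distr M (M' b) (X b). P (\<phi> p) s" unfolding dist by (rule ae)
    then have "AE \<omega> in M. P (\<phi> p) (X b \<omega>)"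
      using AE_distr_iff[OF Xb, of "\<lambda>s. P (\<phi> p) s"] sec by (simp add: Measurable.pred_def)
    moreover have "(\<lambda>q. P (\<phi> p) (q b)) \<in> measurable (PiM {b} M') (count_space UNIV)"
    proof -
      have "(\<lambda>q. q b) \<in> measurable (PiM {b} M') (M' b)" by (rule measurable_component_singleton) simp
      from measurable_compose[OF this sec] show ?thesis by (simp add: o_def)
    qed
    ultimately show ?thesis
      using AE_distr_iff[OF rv(2), of "\<lambda>q. P (\<phi> p) (q b)"] by (simp add: Measurable.pred_def Zb_def)
  qed
  have "AE z in distr M (PiM K M') Z \<Otimes>\<^sub>M distr M (PiM {b} M') Zb. P (\<phi> (fst z)) (snd z b)"
    by (rule AE_pair_measure[OF Q']) (use inner in simp)
  then have "AE z in distr M (PiM K M' \<Otimes>\<^sub>M PiM {b} M') (\<lambda>\<omega>. (Z \<omega>, Zb \<omega>)). P (\<phi> (fst z)) (snd z b)"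
    by (simp only: eq[symmetric])
  moreover have "(\<lambda>\<omega>. (Z \<omega>, Zb \<omega>)) \<in> measurable M (PiM K M' \<Otimes>\<^sub>M PiM {b} M')"
    using rv by (rule measurable_Pair)
  ultimately have "AE \<omega> in M. P (\<phi> (Z \<omega>)) (Zb \<omega> b)"
    using AE_distr_iff[of "\<lambda>\<omega>. (Z \<omega>, Zb \<omega>)" M "PiM K M' \<Otimes>\<^sub>M PiM {b} M'" "\<lambda>z. P (\<phi> (fst z)) (snd z b)"] Q
    by (simp add: Measurable.pred_def)
  then show ?thesis by (simp add: Z_def Zb_def)
qed


theorem lemma1:
  fixes N I :: nat
    and \<eta> \<gamma> L0 L1 \<sigma> \<kappa> \<rho> C :: real
    and f :: "nat \<Rightarrow> 'a::euclidean_space \<Rightarrow> real"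
    and gf :: "nat \<Rightarrow> 'a \<Rightarrow> 'a"
    and Hf :: "nat \<Rightarrow> 'a \<Rightarrow> 'a \<Rightarrow> 'a"
    and F :: "nat \<Rightarrow> 'a \<Rightarrow> 'b \<Rightarrow> real"
    and gF :: "nat \<Rightarrow> 'a \<Rightarrow> 'b \<Rightarrow> 'a"
    and D :: "nat \<Rightarrow> 'b measure"
    and M :: "'w measure"
    and Xt :: "nat \<Rightarrow> nat \<Rightarrow> 'w \<Rightarrow> 'b"
    and Xs :: "nat \<Rightarrow> nat \<Rightarrow> 'w \<Rightarrow> 'b"
    and x0 :: 'a
    and r i k :: nat
  assumes N_pos: "N \<ge> 1" and I_pos: "I \<ge> 1"
    and eta_pos: "\<eta> > 0" and gamma_pos: "\<gamma> > 0"
    and L0_nn: "L0 \<ge> 0" and L1_pos: "L1 > 0"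
    and sigma_nn: "\<sigma> \<ge> 0" and kappa_nn: "\<kappa> \<ge> 0" and rho_ge: "\<rho> \<ge> 1"
    and D_prob: "\<And>j. j < N \<Longrightarrow> prob_space (D j)"
    \<comment> \<open>F_i(\<cdot>;\<xi>) is differentiable with gradient gF i \<cdot> \<xi>\<close>
    and F_grad: "\<And>j x s. j < N \<Longrightarrow> s \<in> space (D j) \<Longrightarrow>
        ((\<lambda>y. F j y s) has_derivative (\<lambda>h. gF j x s \<bullet> h)) (at x)"
    \<comment> \<open>f_i = E[F_i]\<close>
    and f_def: "\<And>j x. j < N \<Longrightarrow> integrable (D j) (F j x) \<and> f j x = integral\<^sup>L (D j) (F j x)"
    \<comment> \<open>f_i twice differentiable: gradient gf, Hessian Hf\<close>
    and f_grad: "\<And>j x. j < N \<Longrightarrow> (f j has_derivative (\<lambda>h. gf j x \<bullet> h)) (at x)"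
    and f_hess: "\<And>j x. j < N \<Longrightarrow> (gf j has_derivative Hf j x) (at x)"
    and smooth: "\<And>j x. j < N \<Longrightarrow> onorm (Hf j x) \<le> L0 + L1 * norm (gf j x)"
    \<comment> \<open>unbiasedness and a.s. bounded noise\<close>
    and unbiased: "\<And>j x. j < N \<Longrightarrow> integrable (D j) (gF j x) \<and> integral\<^sup>L (D j) (gF j x) = gf j x"
    and noise: "\<And>j x. j < N \<Longrightarrow> AE s in D j. norm (gF j x s - gf j x) \<le> \<sigma>"
    \<comment> \<open>heterogeneity, with \<nabla>f = (1/N) \<Sum> \<nabla>f_i\<close>
    and hetero: "\<And>j x. j < N \<Longrightarrow>
        norm (gf j x) \<le> \<kappa> + \<rho> * norm ((1 / real N) *\<^sub>R (\<Sum>l<N. gf l x))"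
    \<comment> \<open>sampling: all samples independent, client j samples from D j\<close>
    and M_prob: "prob_space M"
    and Xt_dist: "\<And>q j. j < N \<Longrightarrow> Xt q j \<in> measurable M (D j) \<and> distr M (D j) (Xt q j) = D j"
    and Xs_dist: "\<And>t j. j < N \<Longrightarrow> Xs t j \<in> measurable M (D j) \<and> distr M (D j) (Xs t j) = D j"
    and indep: "prob_space.indep_vars M
        (\<lambda>a. case a of Inl (q, j) \<Rightarrow> D j | Inr (t, j) \<Rightarrow> D j)
        (\<lambda>a \<omega>. case a of Inl (q, j) \<Rightarrow> Xt q j \<omega> | Inr (t, j) \<Rightarrow> Xs t j \<omega>)
        (Inl ` (UNIV \<times> {..<N}) \<union> Inr ` (UNIV \<times> {..<N}))"
    \<comment> \<open>step-size conditions\<close>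
    and C_ge: "C \<ge> 1"
    and cond1: "2 * \<eta> * real I * ((1 + exp C - (exp C - 1) / C) * L0
                 + ((exp C - 1) / C) * L1 * \<kappa>
                 + ((exp C - 1) / C) * L1 * \<rho> * (\<sigma> + \<gamma> / \<eta>)) \<le> 1"
    and cond2: "max (2 * \<eta> * real I * (2 * \<sigma> + \<gamma> / \<eta>)) (\<gamma> * real I) \<le> C / L1"
    \<comment> \<open>t = rI + k with t - 1 \<in> I_r, i.e. 1 \<le> k \<le> I\<close>
    and i_lt: "i < N" and k_ge: "1 \<le> k" and k_le: "k \<le> I"
  shows "AE \<omega> in M.
    (let xt = (\<lambda>q j. Xt q j \<omega>); xs = (\<lambda>t j. Xs t j \<omega>);
         xb = epi_xbar N I \<eta> \<gamma> gF xt xs x0 r;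
         xit = epi_loc N I \<eta> \<gamma> gF xt xs r xb i k;
         A = (norm (epi_G N gF xt r xb) \<le> \<gamma> / \<eta>)
     in of_bool A * norm (xit - xb) \<le> 2 * \<eta> * real I * (2 * \<sigma> + \<gamma> / \<eta>)
      \<and> of_bool (\<not> A) * norm (xit - xb) \<le> \<gamma> * real I)"
  proof -
  interpret Mp: prob_space M by (rule M_prob)
  define X where "X = (\<lambda>a \<omega>. case a of Inl (q, j) \<Rightarrow> Xt q j \<omega> | Inr (t, j) \<Rightarrow> Xs t j \<omega>)"
  define II where "II = Inl ` ((UNIV::nat set) \<times> {..<N}) \<union> Inr ` ((UNIV::nat set) \<times> {..<N})"
  have ind: "prob_space.indep_vars M (Msp D) X II"
    using indep unfolding X_def II_def Msp_def .
  have gm: "(\<lambda>z. gF j (fst z) (snd z)) \<in> borel_measurable (borel \<Otimes>\<^sub>M D j)" if j: "j < N" for j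
  proof (rule gF_joint_meas[of "F j"])
    fix x show "F j x \<in> borel_measurable (D j)" using f_def[OF j, of x] by auto
  next
    fix x s assume "s \<in> space (D j)"
    then show "((\<lambda>y. F j y s) has_derivative (\<lambda>h. gF j x s \<bullet> h)) (at x)" using F_grad[OF j] by blast
  qed
  have gfm: "(\<lambda>z. gf j (fst z)) \<in> borel_measurable (borel \<Otimes>\<^sub>M D j)" if j: "j < N" for j
  proof -
    have "continuous_on UNIV (gf j)"
      using has_derivative_continuous[OF f_hess[OF j]] by (simp add: continuous_on_eq_continuous_at)
    then have "gf j \<in> borel_measurable borel" by (rule borel_measurable_continuous_onI)
    from measurable_compose[OF measurable_fst[of borel "D j"] this] show ?thesis by (simp add: o_def)
  qed
  have Pm: "(\<lambda>z. norm (gF j (fst z) (snd z) - gf j (fst z)) \<le> \<sigma>) \<in> measurable (borel \<Otimes>\<^sub>M D j) (count_space UNIV)"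
    if j: "j < N" for j
    using gm[OF j] gfm[OF j] by measurable
  define xbphi where "xbphi = (\<lambda>p. epi_xbar N I \<eta> \<gamma> gF (\<lambda>q j. p (Inl (q, j))) (\<lambda>t j. p (Inr (t, j))) x0 r)"
  define locphi where "locphi = (\<lambda>m p. epi_loc N I \<eta> \<gamma> gF (\<lambda>q j. p (Inl (q, j))) (\<lambda>t j. p (Inr (t, j))) r (xbphi p) i m)"
  define K0 where "K0 = Inl ` ({..<r} \<times> {..<N}) \<union> Inr ` ({..<r * I} \<times> {..<N})"
  define Km where "Km = (\<lambda>m. Inl ` ({..r} \<times> {..<N}) \<union> Inr ` ({..<r * I + m} \<times> {..<N}))"
  define xbw where "xbw = (\<lambda>\<omega>. epi_xbar N I \<eta> \<gamma> gF (\<lambda>q j. Xt q j \<omega>) (\<lambda>t j. Xs t j \<omega>) x0 r)"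
  define xw where "xw = (\<lambda>m \<omega>. epi_loc N I \<eta> \<gamma> gF (\<lambda>q j. Xt q j \<omega>) (\<lambda>t j. Xs t j \<omega>) r (xbw \<omega>) i m)"
  have c0: "xbphi (restrict (\<lambda>a. X a \<omega>) K') = xbw \<omega>" if "K0 \<subseteq> K'" for K' \<omega>
    unfolding xbphi_def xbw_def
  proof (rule epi_xbar_cong)
    fix q j assume "q < r" "j < N"
    then have "Inl (q, j) \<in> K'" using that by (auto simp: K0_def)
    then show "restrict (\<lambda>a. X a \<omega>) K' (Inl (q, j)) = Xt q j \<omega>" by (simp add: X_def)
  next
    fix t j assume "t < r * I" "j < N"
    then have "Inr (t, j) \<in> K'" using that by (auto simp: K0_def)
    then show "restrict (\<lambda>a. X a \<omega>) K' (Inr (t, j)) = Xs t j \<omega>" by (simp add: X_def)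
  qed
  have K0m: "K0 \<subseteq> Km m" for m by (auto simp: K0_def Km_def)
  have cm: "locphi m (restrict (\<lambda>a. X a \<omega>) (Km m)) = xw m \<omega>" for m \<omega>
    unfolding locphi_def xw_def c0[OF K0m]
  proof (rule epi_loc_cong[OF _ i_lt])
    fix j assume "j < N"
    then show "restrict (\<lambda>a. X a \<omega>) (Km m) (Inl (r, j)) = Xt r j \<omega>" by (simp add: X_def Km_def)
  next
    fix m' assume "m' < m"
    then show "restrict (\<lambda>a. X a \<omega>) (Km m) (Inr (r * I + m', i)) = Xs (r * I + m') i \<omega>"
      using i_lt by (simp add: X_def Km_def)
  qed
  have xbm: "xbphi \<in> borel_measurable (PiM K' (Msp D))" if "K0 \<subseteq> K'" for K'
    unfolding xbphi_def by (rule meas_xbar[OF gm]) (use that in \<open>auto simp: K0_def\<close>)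
  have H1: "AE \<omega> in M. \<forall>j\<in>{..<N}. norm (gF j (xbw \<omega>) (Xt r j \<omega>) - gf j (xbw \<omega>)) \<le> \<sigma>"
  proof (rule AE_finite_allI[OF finite_lessThan])
    fix j assume "j \<in> {..<N}"
    then have j: "j < N" by simp
    have e0: "xbphi (restrict (\<lambda>a. X a \<omega>) K0) = xbw \<omega>" for \<omega> by (rule c0) simp
    have Xe: "X (Inl (r, j)) \<omega> = Xt r j \<omega>" for \<omega> by (simp add: X_def)
    have "AE \<omega> in M. norm (gF j (xbphi (restrict (\<lambda>a. X a \<omega>) K0)) (X (Inl (r, j)) \<omega>) - gf j (xbphi (restrict (\<lambda>a. X a \<omega>) K0))) \<le> \<sigma>"
    proof (rule AE_fresh[OF M_prob ind, where P = "\<lambda>x s. norm (gF j x s - gf j x) \<le> \<sigma>"])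
      show "K0 \<subseteq> II" by (auto simp: K0_def II_def)
      show "Inl (r, j) \<in> II" using j by (auto simp: II_def)
      show "Inl (r, j) \<notin> K0" by (auto simp: K0_def)
      show "xbphi \<in> borel_measurable (PiM K0 (Msp D))" by (rule xbm) simp
      show "distr M (Msp D (Inl (r, j))) (X (Inl (r, j))) = Msp D (Inl (r, j))"
        using Xt_dist[OF j, of r] by (simp add: X_def)
      show "(\<lambda>z. norm (gF j (fst z) (snd z) - gf j (fst z)) \<le> \<sigma>) \<in> measurable (borel \<Otimes>\<^sub>M Msp D (Inl (r, j))) (count_space UNIV)"
        using Pm[OF j] by simp
      fix x show "AE s in Msp D (Inl (r, j)). norm (gF j x s - gf j x) \<le> \<sigma>"
        unfolding Msp_simps by (rule noise[OF j])
    qed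
    then show "AE \<omega> in M. norm (gF j (xbw \<omega>) (Xt r j \<omega>) - gf j (xbw \<omega>)) \<le> \<sigma>"
      by (simp only: e0 Xe)
  qed
  have H2: "AE \<omega> in M. \<forall>m\<in>{..<I}. norm (gF i (xw m \<omega>) (Xs (r * I + m) i \<omega>) - gf i (xw m \<omega>)) \<le> \<sigma>"
  proof (rule AE_finite_allI[OF finite_lessThan])
    fix m assume "m \<in> {..<I}"
    then have m: "m < I" by simp
    have "AE \<omega> in M. norm (gF i (locphi m (restrict (\<lambda>a. X a \<omega>) (Km m))) (X (Inr (r * I + m, i)) \<omega>) - gf i (locphi m (restrict (\<lambda>a. X a \<omega>) (Km m)))) \<le> \<sigma>"
    proof (rule AE_fresh[OF M_prob ind, where P = "\<lambda>x s. norm (gF i x s - gf i x) \<le> \<sigma>"])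
      show "Km m \<subseteq> II" by (auto simp: Km_def II_def)
      show "Inr (r * I + m, i) \<in> II" using i_lt by (auto simp: II_def)
      show "Inr (r * I + m, i) \<notin> Km m" by (auto simp: Km_def)
      show "locphi m \<in> borel_measurable (PiM (Km m) (Msp D))"
        unfolding locphi_def
        by (rule meas_loc[OF gm _ _ i_lt xbm[OF K0m]]) (auto simp: Km_def i_lt)
      show "distr M (Msp D (Inr (r * I + m, i))) (X (Inr (r * I + m, i))) = Msp D (Inr (r * I + m, i))"
        using Xs_dist[OF i_lt, of "r * I + m"] by (simp add: X_def)
      show "(\<lambda>z. norm (gF i (fst z) (snd z) - gf i (fst z)) \<le> \<sigma>) \<in> measurable (borel \<Otimes>\<^sub>M Msp D (Inr (r * I + m, i))) (count_space UNIV)"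
        using Pm[OF i_lt] by simp
      fix x show "AE s in Msp D (Inr (r * I + m, i)). norm (gF i x s - gf i x) \<le> \<sigma>"
        unfolding Msp_simps by (rule noise[OF i_lt])
    qed
    then show "AE \<omega> in M. norm (gF i (xw m \<omega>) (Xs (r * I + m) i \<omega>) - gf i (xw m \<omega>)) \<le> \<sigma>"
      unfolding cm by (simp add: X_def)
  qed
  have c2: "2 * \<eta> * real I * (2 * \<sigma> + \<gamma> / \<eta>) \<le> C / L1" using cond2 by simp
  have R0: "0 \<le> 2 * \<eta> * real I * (2 * \<sigma> + \<gamma> / \<eta>)" using eta_pos gamma_pos sigma_nn by simp
  show ?thesis
  proof (rule AE_mp[OF AE_conjI[OF H1 H2]], rule AE_I2, intro impI)
    fix \<omega> assume h: "(\<forall>j\<in>{..<N}. norm (gF j (xbw \<omega>) (Xt r j \<omega>) - gf j (xbw \<omega>)) \<le> \<sigma>) \<and>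
       (\<forall>m\<in>{..<I}. norm (gF i (xw m \<omega>) (Xs (r * I + m) i \<omega>) - gf i (xw m \<omega>)) \<le> \<sigma>)"
    let ?xt = "\<lambda>q j. Xt q j \<omega>" and ?xs = "\<lambda>t j. Xs t j \<omega>"
    have xbw_eq: "epi_xbar N I \<eta> \<gamma> gF ?xt ?xs x0 r = xbw \<omega>" by (simp add: xbw_def)
    have A1: "norm (epi_loc N I \<eta> \<gamma> gF ?xt ?xs r (xbw \<omega>) i k - xbw \<omega>) \<le> 2 * \<eta> * real I * (2 * \<sigma> + \<gamma> / \<eta>)"
      if A: "norm (epi_G N gF ?xt r (xbw \<omega>)) \<le> \<gamma> / \<eta>"
    proof -
      have h1: "\<forall>j<N. norm (gF j (xbw \<omega>) (Xt r j \<omega>) - gf j (xbw \<omega>)) \<le> \<sigma>" using h by simp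
      have h2: "\<forall>m<k. norm (gF i (epi_loc N I \<eta> \<gamma> gF ?xt ?xs r (xbw \<omega>) i m) (Xs (r * I + m) i \<omega>) -
                 gf i (epi_loc N I \<eta> \<gamma> gF ?xt ?xs r (xbw \<omega>) i m)) \<le> \<sigma>"
        using h k_le by (auto simp: xw_def)
      show ?thesis
        apply (rule det_main)
        apply (rule N_pos)
        apply (rule eta_pos)
        apply (rule gamma_pos)
        apply (rule L0_nn)
        apply (rule L1_pos)
        apply (rule sigma_nn)
        apply (rule kappa_nn)
        apply (rule rho_ge)
        apply (rule f_hess[OF i_lt])
        apply (rule smooth[OF i_lt])
        apply (rule hetero[OF i_lt])
        apply (rule C_ge)
        apply (rule cond1)
        apply (rule c2)
        apply (rule k_le)
        apply (rule i_lt)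
        apply (rule h1)
        apply (rule h2)
        apply (rule A)
        done
    qed
    have A2: "norm (epi_loc N I \<eta> \<gamma> gF ?xt ?xs r (xbw \<omega>) i k - xbw \<omega>) \<le> \<gamma> * real I"
      if A: "\<not> norm (epi_G N gF ?xt r (xbw \<omega>)) \<le> \<gamma> / \<eta>"
    proof -
      have "norm (epi_loc N I \<eta> \<gamma> gF ?xt ?xs r (xbw \<omega>) i k - xbw \<omega>) \<le> \<gamma> * real k"
        by (rule clip_bound[OF gamma_pos A])
      also have "\<dots> \<le> \<gamma> * real I" using k_le gamma_pos by simp
      finally show ?thesis .
    qed
    show "let xt = ?xt; xs = ?xs;
         xb = epi_xbar N I \<eta> \<gamma> gF xt xs x0 r;
         xit = epi_loc N I \<eta> \<gamma> gF xt xs r xb i k;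
         A = (norm (epi_G N gF xt r xb) \<le> \<gamma> / \<eta>)
     in of_bool A * norm (xit - xb) \<le> 2 * \<eta> * real I * (2 * \<sigma> + \<gamma> / \<eta>)
      \<and> of_bool (\<not> A) * norm (xit - xb) \<le> \<gamma> * real I"
      unfolding Let_def xbw_eq
      using A1 A2 R0 gamma_pos by (cases "norm (epi_G N gF ?xt r (xbw \<omega>)) \<le> \<gamma> / \<eta>") auto
  qed
qed


end
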